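(* Let $k\ge1$ be an integer and let $F$ be a distribution function on $\mathbb{R}$ with $\int x^{2k}dF(x)<\infty$. For $n\ge1$ let $\hat t^{(k)}_n$ be the polynomial Pitman estimator of degree $k$ of $\theta$ from a sample of size $n$ from $F(x-\theta)$. Then for all $n\ge1$, $$(n+1)\,\mathrm{var}(\hat t^{(k)}_{n+1})\ \le\ n\,\mathrm{var}(\hat t^{(k)}_n).$$
   Context: A sample of size $n$ from $F(x-\theta)$ ($\theta\in\mathbb{R}$ unknown) is $x_1,\ldots,x_n$ i.i.d. with $x_i-\theta\sim F$. Let $M_k$ be the space of polynomials of degree at most $k$ in the residuals $x_1-\bar x,\ldots,x_n-\bar x$, and $\hat E(\cdot\mid M_k)$ the orthogonal projection onto $M_k$ in the Hilbert space of polynomials of degree at most $k$ in $x_1,\ldots,x_n$ with inner product $(q_1,q_2)=E_0(q_1q_2)$, $E_0$ being expectation under $\theta=0$. The polynomial Pitman estimator of degree $k$ is $\hat t^{(k)}_n=\bar x-\hat E(\bar x\mid M_k)$, the minimum variance equivariant polynomial estimator of degree $k$ (equivariant: $t(x_1+c,\ldots,x_n+c)=t(x_1,\ldots,x_n)+c$). *)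

theory Defs
  imports "HOL-Probability.Probability"
begin

text \<open>Samples of size n are functions x :: nat \<Rightarrow> real, of which only x 0, ..., x (n-1) are used.\<close>

definition monomial :: "nat \<Rightarrow> (nat \<Rightarrow> nat) \<Rightarrow> (nat \<Rightarrow> real) \<Rightarrow> real" where
  "monomial n a x = (\<Prod>i<n. x i ^ a i)"

definition poly_fun :: "nat \<Rightarrow> nat \<Rightarrow> ((nat \<Rightarrow> real) \<Rightarrow> real) set" where
  "poly_fun n k = {p. \<exists>A c. finite A \<and> (\<forall>a\<in>A. (\<Sum>i<n. a i) \<le> k) \<and>
       p = (\<lambda>x. \<Sum>a\<in>A. c a * monomial n a x)}"

definition xbar :: "nat \<Rightarrow> (nat \<Rightarrow> real) \<Rightarrow> real" where
  "xbar n x = (\<Sum>i<n. x i) / real n"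

definition resid_poly :: "nat \<Rightarrow> nat \<Rightarrow> ((nat \<Rightarrow> real) \<Rightarrow> real) set" where
  "resid_poly n k = {(\<lambda>x. P (\<lambda>i. x i - xbar n x)) | P. P \<in> poly_fun n k}"

definition sample :: "nat \<Rightarrow> real measure \<Rightarrow> real \<Rightarrow> (nat \<Rightarrow> real) measure" where
  "sample n F \<theta> = PiM {..<n} (\<lambda>_. distr F borel (\<lambda>x. x + \<theta>))"

definition is_proj :: "nat \<Rightarrow> nat \<Rightarrow> real measure \<Rightarrow> ((nat \<Rightarrow> real) \<Rightarrow> real) \<Rightarrow> bool" where
  "is_proj n k F q \<longleftrightarrow> q \<in> resid_poly n k \<and>
     (\<forall>p\<in>resid_poly n k. (LINT x|sample n F 0. (xbar n x - q x) * p x) = 0)"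

definition pitman :: "nat \<Rightarrow> ((nat \<Rightarrow> real) \<Rightarrow> real) \<Rightarrow> (nat \<Rightarrow> real) \<Rightarrow> real" where
  "pitman n q = (\<lambda>x. xbar n x - q x)"

definition var :: "'a measure \<Rightarrow> ('a \<Rightarrow> real) \<Rightarrow> real" where
  "var M X = (LINT x|M. (X x - (LINT y|M. X y))^2)"

end

theory Submission
  imports Defs
begin

lemma monomial_mult: "monomial n a x * monomial n b x = monomial n (\<lambda>i. a i + b i) x"
  unfolding monomial_def by (simp add: power_add prod.distrib)

lemma monomial_zero[simp]: "monomial n (\<lambda>_. 0) x = 1"
  unfolding monomial_def by simp

lemma poly_funI:
  assumes "finite A" "\<forall>a\<in>A. (\<Sum>i<n. a i) \<le> d"
  shows "(\<lambda>x. \<Sum>a\<in>A. c a * monomial n a x) \<in> poly_fun n d"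
  using assms unfolding poly_fun_def by blast

lemma poly_funE:
  assumes "f \<in> poly_fun n d"
  obtains A c where "finite A" "\<forall>a\<in>A. (\<Sum>i<n. a i) \<le> d"
    "f = (\<lambda>x. \<Sum>a\<in>A. c a * monomial n a x)"
  using assms unfolding poly_fun_def by blast

lemma poly_fun_monom:
  assumes "(\<Sum>i<n. a i) \<le> d"
  shows "(\<lambda>x. c * monomial n a x) \<in> poly_fun n d"
  using poly_funI[of "{a}" n d "\<lambda>_. c"] assms by simp

lemma poly_fun_const: "(\<lambda>x. c) \<in> poly_fun n d"
  using poly_fun_monom[where a="\<lambda>_. 0" and n=n and d=d and c=c] by simp

lemma poly_fun_mono: "d \<le> d' \<Longrightarrow> f \<in> poly_fun n d \<Longrightarrow> f \<in> poly_fun n d'"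
  unfolding poly_fun_def by fastforce

lemma poly_fun_add:
  assumes "f \<in> poly_fun n d" "g \<in> poly_fun n d"
  shows "(\<lambda>x. f x + g x) \<in> poly_fun n d"
proof -
  obtain A c where A: "finite A" "\<forall>a\<in>A. (\<Sum>i<n. a i) \<le> d"
    "f = (\<lambda>x. \<Sum>a\<in>A. c a * monomial n a x)" using assms(1) by (rule poly_funE)
  obtain B c' where B: "finite B" "\<forall>a\<in>B. (\<Sum>i<n. a i) \<le> d"
    "g = (\<lambda>x. \<Sum>a\<in>B. c' a * monomial n a x)" using assms(2) by (rule poly_funE)
  define e where "e a = (if a \<in> A then c a else 0) + (if a \<in> B then c' a else 0)" for a
  have "(\<lambda>x. \<Sum>a\<in>A\<union>B. e a * monomial n a x) \<in> poly_fun n d"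
    using A B by (intro poly_funI) auto
  moreover have "(\<lambda>x. \<Sum>a\<in>A\<union>B. e a * monomial n a x) = (\<lambda>x. f x + g x)"
  proof
    fix x
    have "(\<Sum>a\<in>A\<union>B. e a * monomial n a x) =
      (\<Sum>a\<in>A\<union>B. (if a \<in> A then c a * monomial n a x else 0)) +
      (\<Sum>a\<in>A\<union>B. (if a \<in> B then c' a * monomial n a x else 0))"
      unfolding sum.distrib[symmetric] by (intro sum.cong) (auto simp: e_def algebra_simps)
    also have "\<dots> = (\<Sum>a\<in>A. c a * monomial n a x) + (\<Sum>a\<in>B. c' a * monomial n a x)"
      using A B by (simp add: sum.If_cases Int_absorb1 Int_absorb2)
    finally show "(\<Sum>a\<in>A\<union>B. e a * monomial n a x) = f x + g x" using A B by simp
  qed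
  ultimately show ?thesis by simp
qed

lemma poly_fun_scale:
  assumes "f \<in> poly_fun n d"
  shows "(\<lambda>x. r * f x) \<in> poly_fun n d"
proof -
  obtain A c where A: "finite A" "\<forall>a\<in>A. (\<Sum>i<n. a i) \<le> d"
    "f = (\<lambda>x. \<Sum>a\<in>A. c a * monomial n a x)" using assms(1) by (rule poly_funE)
  have "(\<lambda>x. \<Sum>a\<in>A. (r * c a) * monomial n a x) \<in> poly_fun n d"
    using A by (intro poly_funI) auto
  thus ?thesis using A by (simp add: sum_distrib_left mult.assoc)
qed

lemma poly_fun_diff:
  assumes "f \<in> poly_fun n d" "g \<in> poly_fun n d"
  shows "(\<lambda>x. f x - g x) \<in> poly_fun n d"
  using poly_fun_add[OF assms(1) poly_fun_scale[OF assms(2), of "-1"]] by simp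

lemma poly_fun_sum:
  assumes "finite S" "\<forall>s\<in>S. f s \<in> poly_fun n d"
  shows "(\<lambda>x. \<Sum>s\<in>S. f s x) \<in> poly_fun n d"
  using assms
proof (induction S rule: finite_induct)
  case empty
  then show ?case using poly_fun_const[of 0 n d] by simp
next
  case (insert s S)
  then show ?case using poly_fun_add[of "f s" n d "\<lambda>x. \<Sum>s\<in>S. f s x"] by simp
qed

lemma poly_fun_mult:
  assumes "f \<in> poly_fun n d1" "g \<in> poly_fun n d2"
  shows "(\<lambda>x. f x * g x) \<in> poly_fun n (d1 + d2)"
proof -
  obtain A c where A: "finite A" "\<forall>a\<in>A. (\<Sum>i<n. a i) \<le> d1"
    "f = (\<lambda>x. \<Sum>a\<in>A. c a * monomial n a x)" using assms(1) by (rule poly_funE)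
  obtain B c' where B: "finite B" "\<forall>a\<in>B. (\<Sum>i<n. a i) \<le> d2"
    "g = (\<lambda>x. \<Sum>a\<in>B. c' a * monomial n a x)" using assms(2) by (rule poly_funE)
  have eq: "f x * g x = (\<Sum>a\<in>A. \<Sum>b\<in>B. (c a * c' b) * monomial n (\<lambda>i. a i + b i) x)" for x
  proof -
    have "f x * g x = (\<Sum>a\<in>A. \<Sum>b\<in>B. (c a * monomial n a x) * (c' b * monomial n b x))"
      by (simp only: A(3) B(3) sum_product)
    also have "\<dots> = (\<Sum>a\<in>A. \<Sum>b\<in>B. (c a * c' b) * monomial n (\<lambda>i. a i + b i) x)"
      by (intro sum.cong refl) (simp add: monomial_mult[symmetric] ac_simps)
    finally show ?thesis .
  qed
  have "(\<lambda>x. \<Sum>a\<in>A. \<Sum>b\<in>B. (c a * c' b) * monomial n (\<lambda>i. a i + b i) x) \<in> poly_fun n (d1+d2)"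
  proof (intro poly_fun_sum ballI)
    show "finite A" "finite B" using A B by auto
    fix a b assume "a \<in> A" "b \<in> B"
    then show "(\<lambda>x. (c a * c' b) * monomial n (\<lambda>i. a i + b i) x) \<in> poly_fun n (d1+d2)"
      using A B by (intro poly_fun_monom) (auto simp: sum.distrib intro: add_mono)
  qed
  then show ?thesis using eq by simp
qed

lemma poly_fun_var:
  assumes "i < n" "1 \<le> d"
  shows "(\<lambda>x. x i) \<in> poly_fun n d"
proof -
  have "(\<Sum>j<n. (if j = i then 1 else 0::nat)) = 1" using assms by simp
  then have "(\<lambda>x. 1 * monomial n (\<lambda>j. if j = i then 1 else 0) x) \<in> poly_fun n d"
    using assms by (intro poly_fun_monom) auto
  moreover have "monomial n (\<lambda>j. if j = i then 1 else 0) x = x i" for x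
    unfolding monomial_def using assms
    by (simp add: if_distrib[of "\<lambda>e. x _ ^ e"] prod.delta cong: if_cong)
  ultimately show ?thesis by simp
qed

lemma poly_fun_power:
  assumes "f \<in> poly_fun n d"
  shows "(\<lambda>x. f x ^ m) \<in> poly_fun n (m * d)"
proof (induction m)
  case 0
  then show ?case using poly_fun_const[of 1 n 0] by simp
next
  case (Suc m)
  then show ?case using poly_fun_mult[OF assms Suc] by (simp add: add.commute)
qed

lemma poly_fun_power1:
  assumes "f \<in> poly_fun n 1"
  shows "(\<lambda>x. f x ^ m) \<in> poly_fun n m"
  using poly_fun_power[OF assms, of m] by simp

lemma poly_fun_prod:
  assumes "finite S" "\<forall>s\<in>S. f s \<in> poly_fun n (e s)"
  shows "(\<lambda>x. \<Prod>s\<in>S. f s x) \<in> poly_fun n (\<Sum>s\<in>S. e s)"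
  using assms
proof (induction S rule: finite_induct)
  case empty
  then show ?case using poly_fun_const[of 1 n 0] by simp
next
  case (insert s S)
  then show ?case using poly_fun_mult[of "f s" n "e s" "\<lambda>x. \<Prod>s\<in>S. f s x"] by simp
qed

lemma poly_fun_compose:
  assumes "P \<in> poly_fun n k" "\<forall>j<n. L j \<in> poly_fun m 1"
  shows "(\<lambda>x. P (\<lambda>j. L j x)) \<in> poly_fun m k"
proof -
  obtain A c where A: "finite A" "\<forall>a\<in>A. (\<Sum>i<n. a i) \<le> k"
    "P = (\<lambda>x. \<Sum>a\<in>A. c a * monomial n a x)" using assms(1) by (rule poly_funE)
  have "(\<lambda>x. \<Sum>a\<in>A. c a * (\<Prod>j<n. L j x ^ a j)) \<in> poly_fun m k"
  proof (intro poly_fun_sum ballI)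
    show "finite A" by fact
    fix a assume a: "a \<in> A"
    have "(\<lambda>x. \<Prod>j<n. L j x ^ a j) \<in> poly_fun m (\<Sum>j<n. a j)"
      using assms(2) by (intro poly_fun_prod) (auto intro: poly_fun_power1)
    then have "(\<lambda>x. \<Prod>j<n. L j x ^ a j) \<in> poly_fun m k"
      by (rule poly_fun_mono[rotated]) (use A a in auto)
    then show "(\<lambda>x. c a * (\<Prod>j<n. L j x ^ a j)) \<in> poly_fun m k" by (rule poly_fun_scale)
  qed
  then show ?thesis using A by (simp add: monomial_def)
qed

lemma poly_fun_local:
  assumes "P \<in> poly_fun n d" "\<And>i. i < n \<Longrightarrow> z i = z' i"
  shows "P z = P z'"
proof -
  obtain A c where A: "P = (\<lambda>x. \<Sum>a\<in>A. c a * monomial n a x)" using assms(1) by (rule poly_funE)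
  have "monomial n a z = monomial n a z'" for a
    unfolding monomial_def using assms(2) by (intro prod.cong) auto
  then show ?thesis using A by simp
qed

lemma xbar_poly: "1 \<le> d \<Longrightarrow> xbar n \<in> poly_fun n d"
proof -
  assume d: "1 \<le> d"
  have "(\<lambda>x. \<Sum>i\<in>{..<n}. x i) \<in> poly_fun n d"
    by (rule poly_fun_sum) (auto intro: poly_fun_var[OF _ d])
  then have "(\<lambda>x. (1 / real n) * (\<Sum>i<n. x i)) \<in> poly_fun n d"
    by (rule poly_fun_scale)
  moreover have "xbar n = (\<lambda>x. (1 / real n) * (\<Sum>i<n. x i))"
    unfolding xbar_def by (rule ext) simp
  ultimately show ?thesis by simp
qed

lemma resid_poly_sub: "resid_poly n k \<subseteq> poly_fun n k"
proof
  fix q assume "q \<in> resid_poly n k"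
  then obtain P where P: "P \<in> poly_fun n k" "q = (\<lambda>x. P (\<lambda>i. x i - xbar n x))"
    unfolding resid_poly_def by blast
  have L: "(\<lambda>x. x i - xbar n x) \<in> poly_fun n 1" if "i < n" for i
    using poly_fun_diff[OF poly_fun_var[OF that order.refl] xbar_poly[OF order.refl]] .
  have "(\<lambda>x. P (\<lambda>i. x i - xbar n x)) \<in> poly_fun n k"
    using poly_fun_compose[of P n k "\<lambda>i x. x i - xbar n x" n] P(1) L by simp
  then show "q \<in> poly_fun n k" using P by simp
qed


locale setting =
  fixes F :: "real measure" and k :: nat
  assumes RD: "real_distribution F"
    and mom2k: "integrable F (\<lambda>x. x ^ (2 * k))"
begin

definition mu :: "nat \<Rightarrow> (nat \<Rightarrow> real) measure" where
  "mu m = PiM {..<m} (\<lambda>_. F)"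

definition mom :: "nat \<Rightarrow> real" where
  "mom j = (\<integral>y. y ^ j \<partial>F)"

lemma PF: "prob_space F" using RD by (simp add: real_distribution_def)
lemma sets_F[simp]: "sets F = sets borel" using real_distribution.events_eq_borel[OF RD] .
lemma space_F[simp]: "space F = UNIV" using sets_eq_imp_space_eq[OF sets_F] by simp

lemma meas_F: "f \<in> borel_measurable borel \<Longrightarrow> f \<in> borel_measurable F"
  by (metis (no_types) measurable_cong_sets[OF sets_F refl])

lemma int_pow: assumes "j \<le> 2 * k" shows "integrable F (\<lambda>x. x ^ j)"
proof (rule Bochner_Integration.integrable_bound[where M=F and f="\<lambda>x. 1 + x ^ (2 * k)"])
  interpret prob_space F by (rule PF)
  show "integrable F (\<lambda>x. 1 + x ^ (2 * k))" using mom2k by simp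
  show "(\<lambda>x. x ^ j) \<in> borel_measurable F" by (intro meas_F) simp
  show "AE x in F. norm (x ^ j) \<le> norm (1 + x ^ (2 * k))"
  proof (intro AE_I2)
    fix x :: real
    have e: "x ^ (2 * k) = \<bar>x\<bar> ^ (2 * k)"
      by (metis power_mult power2_abs)
    have "\<bar>x\<bar> ^ j \<le> 1 + \<bar>x\<bar> ^ (2 * k)"
    proof (cases "\<bar>x\<bar> \<le> 1")
      case True
      then have "\<bar>x\<bar> ^ j \<le> 1" by (simp add: power_le_one)
      moreover have "0 \<le> \<bar>x\<bar> ^ (2 * k)" by simp
      ultimately show ?thesis by linarith
    next
      case False
      then have "\<bar>x\<bar> ^ j \<le> \<bar>x\<bar> ^ (2 * k)" using assms by (intro power_increasing) auto
      then show ?thesis by simp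
    qed
    moreover have "norm (x ^ j) = \<bar>x\<bar> ^ j" by (simp add: power_abs)
    moreover have "norm (1 + x ^ (2 * k)) = 1 + \<bar>x\<bar> ^ (2 * k)"
      using e by simp
    ultimately show "norm (x ^ j) \<le> norm (1 + x ^ (2 * k))" by simp
  qed
qed

lemma prob_mu: "prob_space (mu m)"
  unfolding mu_def by (intro prob_space_PiM PF)

lemma PSF: "product_sigma_finite (\<lambda>_::nat. F)"
  unfolding product_sigma_finite_def using PF prob_space_imp_sigma_finite by blast

lemma mono_integrable:
  assumes "\<And>i. i < m \<Longrightarrow> a i \<le> 2 * k"
  shows "integrable (mu m) (monomial m a)"
proof -
  have "integrable (mu m) (\<lambda>x. \<Prod>i\<in>{..<m}. (\<lambda>v. v ^ a i) (x i))"
    unfolding mu_def using assms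
    by (intro product_sigma_finite.product_integrable_prod[OF PSF]) (auto intro: int_pow)
  then show ?thesis unfolding monomial_def[abs_def] by simp
qed

lemma mono_integral:
  assumes "\<And>i. i < m \<Longrightarrow> a i \<le> 2 * k"
  shows "integral\<^sup>L (mu m) (monomial m a) = (\<Prod>i<m. mom (a i))"
proof -
  have "(\<integral>x. (\<Prod>i\<in>{..<m}. (\<lambda>v. v ^ a i) (x i)) \<partial>mu m) = (\<Prod>i\<in>{..<m}. integral\<^sup>L F (\<lambda>v. v ^ a i))"
    unfolding mu_def using assms
    by (intro product_sigma_finite.product_integral_prod[OF PSF]) (auto intro: int_pow)
  then show ?thesis unfolding monomial_def[abs_def] mom_def by simp
qed

lemma poly_integrable:
  assumes "f \<in> poly_fun m (2 * k)"
  shows "integrable (mu m) f"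
proof -
  obtain A c where A: "finite A" "\<forall>a\<in>A. (\<Sum>i<m. a i) \<le> 2 * k"
    "f = (\<lambda>x. \<Sum>a\<in>A. c a * monomial m a x)" using assms by (rule poly_funE)
  have le: "a i \<le> 2 * k" if "a \<in> A" "i < m" for a i
  proof -
    have "a i \<le> (\<Sum>i<m. a i)" using that by (intro member_le_sum) auto
    then show ?thesis using A that by fastforce
  qed
  have "integrable (mu m) (\<lambda>x. \<Sum>a\<in>A. c a * monomial m a x)"
    by (rule Bochner_Integration.integrable_sum, rule integrable_mult_right, rule mono_integrable) (use le in auto)
  then show ?thesis using A by simp
qed

lemma poly_integrable_mult:
  assumes "f \<in> poly_fun m k" "g \<in> poly_fun m k"
  shows "integrable (mu m) (\<lambda>x. f x * g x)"
  using poly_fun_mult[OF assms] by (intro poly_integrable) (simp add: mult_2)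

lemma poly_measurable:
  assumes "f \<in> poly_fun m (2 * k)"
  shows "f \<in> borel_measurable (mu m)"
  using poly_integrable[OF assms] by (rule borel_measurable_integrable)

end

context setting
begin

definition Ei :: "nat \<Rightarrow> ((nat \<Rightarrow> real) \<Rightarrow> real) \<Rightarrow> (nat \<Rightarrow> real) \<Rightarrow> real" where
  "Ei i f x = (\<integral>y. f (x(i := y)) \<partial>F)"

lemma mono_upd:
  assumes "i < m"
  shows "monomial m a (x(i := y)) = y ^ a i * monomial m (a(i := 0)) x"
proof -
  have "monomial m a (x(i := y)) = (x(i:=y)) i ^ a i * (\<Prod>j\<in>{..<m} - {i}. (x(i:=y)) j ^ a j)"
    unfolding monomial_def using assms by (subst prod.remove[of _ i]) auto
  also have "(\<Prod>j\<in>{..<m} - {i}. (x(i:=y)) j ^ a j) = (\<Prod>j\<in>{..<m} - {i}. x j ^ (a(i:=0)) j)"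
    by (intro prod.cong) auto
  also have "\<dots> = monomial m (a(i := 0)) x"
    unfolding monomial_def using assms by (subst (2) prod.remove[of _ i]) auto
  finally show ?thesis by (simp only: fun_upd_same)
qed

lemma Ei_gen:
  assumes "finite S" "\<And>s j. s \<in> S \<Longrightarrow> j < m \<Longrightarrow> e s j \<le> 2 * k" "i < m"
  shows "Ei i (\<lambda>x. \<Sum>s\<in>S. c s * monomial m (e s) x) x =
         (\<Sum>s\<in>S. (c s * mom (e s i)) * monomial m ((e s)(i := 0)) x)"
proof -
  have "Ei i (\<lambda>x. \<Sum>s\<in>S. c s * monomial m (e s) x) x =
     (\<integral>y. (\<Sum>s\<in>S. (c s * monomial m ((e s)(i := 0)) x) * y ^ e s i) \<partial>F)"
    unfolding Ei_def using assms(3) by (intro Bochner_Integration.integral_cong refl sum.cong) (auto simp: mono_upd)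
  also have "\<dots> = (\<Sum>s\<in>S. (\<integral>y. (c s * monomial m ((e s)(i := 0)) x) * y ^ e s i \<partial>F))"
    by (rule Bochner_Integration.integral_sum) (use assms in \<open>auto intro!: int_pow\<close>)
  also have "\<dots> = (\<Sum>s\<in>S. (c s * mom (e s i)) * monomial m ((e s)(i := 0)) x)"
    unfolding mom_def by (intro sum.cong refl) simp
  finally show ?thesis .
qed

lemma Ei_gen1:
  assumes "finite A" "\<forall>a\<in>A. \<forall>j<m. a j \<le> 2 * k" "i < m"
  shows "Ei i (\<lambda>x. \<Sum>a\<in>A. c a * monomial m a x) x =
         (\<Sum>a\<in>A. (c a * mom (a i)) * monomial m (a(i := 0)) x)"
  by (rule Ei_gen) (use assms in auto)

lemma poly_le:
  assumes "f \<in> poly_fun m d"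
  obtains A c where "finite A" "\<forall>a\<in>A. (\<Sum>i<m. a i) \<le> d" "\<And>a j. a \<in> A \<Longrightarrow> j < m \<Longrightarrow> a j \<le> d"
    "f = (\<lambda>x. \<Sum>a\<in>A. c a * monomial m a x)"
proof -
  obtain A c where A: "finite A" "\<forall>a\<in>A. (\<Sum>i<m. a i) \<le> d"
    "f = (\<lambda>x. \<Sum>a\<in>A. c a * monomial m a x)" using assms by (rule poly_funE)
  have le: "a j \<le> d" if "a \<in> A" "j < m" for a j
  proof -
    have "a j \<le> (\<Sum>i<m. a i)" using that by (intro member_le_sum) auto
    then show ?thesis using A that by fastforce
  qed
  show thesis by (rule that[of A c]) (use A le in auto)
qed

lemma Ei_poly:
  assumes "f \<in> poly_fun m d" "d \<le> 2 * k" "i < m"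
  shows "Ei i f \<in> poly_fun m d"
proof -
  obtain A c where A: "finite A" "\<forall>a\<in>A. (\<Sum>i<m. a i) \<le> d" "\<And>a j. a \<in> A \<Longrightarrow> j < m \<Longrightarrow> a j \<le> d"
    "f = (\<lambda>x. \<Sum>a\<in>A. c a * monomial m a x)" using assms(1) by (rule poly_le) blast+
  have le2k: "\<forall>a\<in>A. \<forall>j<m. a j \<le> 2 * k" using A(3) assms(2) order.trans by blast
  have eq: "Ei i f = (\<lambda>x. \<Sum>a\<in>A. (c a * mom (a i)) * monomial m (a(i := 0)) x)"
    using Ei_gen1[of A m i c, OF A(1) le2k assms(3)] A(4) by auto
  have "(\<lambda>x. \<Sum>a\<in>A. (c a * mom (a i)) * monomial m (a(i := 0)) x) \<in> poly_fun m d"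
  proof (intro poly_fun_sum ballI poly_fun_monom)
    fix a assume a: "a \<in> A"
    have "(\<Sum>j<m. (a(i:=0)) j) \<le> (\<Sum>j<m. a j)" by (intro sum_mono) auto
    then show "(\<Sum>j<m. (a(i:=0)) j) \<le> d" using A a by fastforce
  qed (use A in auto)
  then show ?thesis using eq by simp
qed

lemma Ei_comm:
  assumes "f \<in> poly_fun m (2 * k)" "i < m" "j < m"
  shows "Ei i (Ei j f) = Ei j (Ei i f)"
proof (cases "i = j")
  case True then show ?thesis by simp
next
  case False
  obtain A c where A: "finite A" "\<And>a j. a \<in> A \<Longrightarrow> j < m \<Longrightarrow> a j \<le> 2 * k"
    "f = (\<lambda>x. \<Sum>a\<in>A. c a * monomial m a x)" using assms(1) by (rule poly_le) blast
  have le2: "\<forall>a\<in>A. \<forall>j<m. a j \<le> 2 * k" using A(2) by blast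
  have e1: "Ei j f = (\<lambda>x. \<Sum>a\<in>A. (c a * mom (a j)) * monomial m (a(j := 0)) x)"
    using Ei_gen1[of A m j c, OF A(1) le2 assms(3)] A(3) by auto
  have e2: "Ei i f = (\<lambda>x. \<Sum>a\<in>A. (c a * mom (a i)) * monomial m (a(i := 0)) x)"
    using Ei_gen1[of A m i c, OF A(1) le2 assms(2)] A(3) by auto
  have le1: "\<And>a l. a \<in> A \<Longrightarrow> l < m \<Longrightarrow> (a(j:=0)) l \<le> 2 * k" using A by auto
  have le2: "\<And>a l. a \<in> A \<Longrightarrow> l < m \<Longrightarrow> (a(i:=0)) l \<le> 2 * k" using A by auto
  have "Ei i (Ei j f) x = Ei j (Ei i f) x" for x
    unfolding e1 e2
    using Ei_gen[of A m "\<lambda>a. a(j:=0)" i "\<lambda>a. c a * mom (a j)" x, OF A(1) le1 assms(2)]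
      Ei_gen[of A m "\<lambda>a. a(i:=0)" j "\<lambda>a. c a * mom (a i)" x, OF A(1) le2 assms(3)]
    using False by (simp add: fun_upd_twist ac_simps)
  then show ?thesis by auto
qed

lemma Ei_upd[simp]: "Ei i f (x(i := z)) = Ei i f x"
  unfolding Ei_def by simp

lemma Ei_fixed:
  assumes "\<And>x z. g (x(i := z)) = g x"
  shows "Ei i g = g"
proof
  fix x
  interpret prob_space F by (rule PF)
  show "Ei i g x = g x" unfolding Ei_def assms using prob_space space_F by simp
qed

lemma Ei_idem: "Ei i (Ei i f) = Ei i f"
  by (rule Ei_fixed) simp

lemma mono_integral_sum:
  assumes "finite S" "\<And>s j. s \<in> S \<Longrightarrow> j < m \<Longrightarrow> e s j \<le> 2 * k"
  shows "(\<integral>x. (\<Sum>s\<in>S. c s * monomial m (e s) x) \<partial>mu m) = (\<Sum>s\<in>S. c s * (\<Prod>j<m. mom (e s j)))"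
proof -
  have "(\<integral>x. (\<Sum>s\<in>S. c s * monomial m (e s) x) \<partial>mu m) = (\<Sum>s\<in>S. (\<integral>x. c s * monomial m (e s) x \<partial>mu m))"
    by (rule Bochner_Integration.integral_sum) (use assms in \<open>auto intro!: mono_integrable\<close>)
  also have "\<dots> = (\<Sum>s\<in>S. c s * (\<Prod>j<m. mom (e s j)))"
    using assms by (intro sum.cong refl) (simp add: mono_integral)
  finally show ?thesis .
qed

lemma Ei_selfadj:
  assumes "f \<in> poly_fun m k" "g \<in> poly_fun m k" "i < m"
  shows "(\<integral>x. Ei i f x * g x \<partial>mu m) = (\<integral>x. f x * Ei i g x \<partial>mu m)"
proof -
  obtain A c where A: "finite A" "\<forall>a\<in>A. (\<Sum>i<m. a i) \<le> k" "\<And>a j. a \<in> A \<Longrightarrow> j < m \<Longrightarrow> a j \<le> k"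
    "f = (\<lambda>x. \<Sum>a\<in>A. c a * monomial m a x)" using assms(1) by (rule poly_le) blast+
  obtain B c' where B: "finite B" "\<forall>a\<in>B. (\<Sum>i<m. a i) \<le> k" "\<And>a j. a \<in> B \<Longrightarrow> j < m \<Longrightarrow> a j \<le> k"
    "g = (\<lambda>x. \<Sum>a\<in>B. c' a * monomial m a x)" using assms(2) by (rule poly_le) blast+
  have leA: "\<forall>a\<in>A. \<forall>j<m. a j \<le> 2 * k" using A(3) by fastforce
  have leB: "\<forall>a\<in>B. \<forall>j<m. a j \<le> 2 * k" using B(3) by fastforce
  have eA: "Ei i f x = (\<Sum>a\<in>A. (c a * mom (a i)) * monomial m (a(i := 0)) x)" for x
    using Ei_gen1[of A m i c, OF A(1) leA assms(3)] A(4) by auto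
  have eB: "Ei i g x = (\<Sum>a\<in>B. (c' a * mom (a i)) * monomial m (a(i := 0)) x)" for x
    using Ei_gen1[of B m i c', OF B(1) leB assms(3)] B(4) by auto
  define S where "S = A \<times> B"
  have S: "finite S" using A B by (simp add: S_def)
  have L: "Ei i f x * g x = (\<Sum>s\<in>S. (c (fst s) * mom (fst s i) * c' (snd s)) *
      monomial m (\<lambda>j. ((fst s)(i:=0)) j + snd s j) x)" for x
    unfolding eA B(4) S_def sum_product sum.cartesian_product
  proof (intro sum.cong refl)
    fix s assume "s \<in> A \<times> B"
    obtain a b where s: "s = (a, b)" by force
    have "monomial m (\<lambda>j. (a(i:=0)) j + b j) x = monomial m (a(i:=0)) x * monomial m b x"
      by (simp only: monomial_mult)
    then show "(case s of (a, b) \<Rightarrow> c a * mom (a i) * monomial m (a(i := 0)) x * (c' b * monomial m b x)) =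
      (c (fst s) * mom (fst s i) * c' (snd s)) * monomial m (\<lambda>j. ((fst s)(i:=0)) j + snd s j) x"
      unfolding s by (simp add: ac_simps)
  qed
  have R: "f x * Ei i g x = (\<Sum>s\<in>S. (c (fst s) * (c' (snd s) * mom (snd s i))) *
      monomial m (\<lambda>j. fst s j + ((snd s)(i:=0)) j) x)" for x
    unfolding eB A(4) S_def sum_product sum.cartesian_product
  proof (intro sum.cong refl)
    fix s assume "s \<in> A \<times> B"
    obtain a b where s: "s = (a, b)" by force
    have "monomial m (\<lambda>j. a j + (b(i:=0)) j) x = monomial m a x * monomial m (b(i:=0)) x"
      by (simp only: monomial_mult)
    then show "(case s of (a, b) \<Rightarrow> c a * monomial m a x * (c' b * mom (b i) * monomial m (b(i := 0)) x)) =
      (c (fst s) * (c' (snd s) * mom (snd s i))) * monomial m (\<lambda>j. fst s j + ((snd s)(i:=0)) j) x"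
      unfolding s by (simp add: ac_simps)
  qed
  have leS: "fst s j + snd s j \<le> 2 * k" if "s \<in> S" "j < m" for s j
    using that A(3) B(3) unfolding S_def by (auto simp: mult_2 intro: add_mono)
  have leS1: "((fst s)(i:=0)) j + snd s j \<le> 2 * k" if "s \<in> S" "j < m" for s j
    using leS[OF that] by (cases "j = i") auto
  have leS2: "fst s j + ((snd s)(i:=0)) j \<le> 2 * k" if "s \<in> S" "j < m" for s j
    using leS[OF that] by (cases "j = i") auto
  have "(\<integral>x. Ei i f x * g x \<partial>mu m) = (\<Sum>s\<in>S. (c (fst s) * mom (fst s i) * c' (snd s)) *
      (\<Prod>j<m. mom (((fst s)(i:=0)) j + snd s j)))"
    unfolding L by (rule mono_integral_sum[OF S]) (rule leS1)
  also have "\<dots> = (\<Sum>s\<in>S. (c (fst s) * (c' (snd s) * mom (snd s i))) *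
      (\<Prod>j<m. mom (fst s j + ((snd s)(i:=0)) j)))"
  proof (intro sum.cong refl)
    fix s assume "s \<in> S"
    have p1: "(\<Prod>j<m. mom (((fst s)(i:=0)) j + snd s j)) = mom (snd s i) * (\<Prod>j\<in>{..<m}-{i}. mom (fst s j + snd s j))"
      using assms(3) by (subst prod.remove[of _ i]) (auto intro!: prod.cong)
    have p2: "(\<Prod>j<m. mom (fst s j + ((snd s)(i:=0)) j)) = mom (fst s i) * (\<Prod>j\<in>{..<m}-{i}. mom (fst s j + snd s j))"
      using assms(3) by (subst prod.remove[of _ i]) (auto intro!: prod.cong)
    show "(c (fst s) * mom (fst s i) * c' (snd s)) * (\<Prod>j<m. mom (((fst s)(i:=0)) j + snd s j)) =
      (c (fst s) * (c' (snd s) * mom (snd s i))) * (\<Prod>j<m. mom (fst s j + ((snd s)(i:=0)) j))"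
      unfolding p1 p2 by (simp add: ac_simps)
  qed
  also have "\<dots> = (\<integral>x. f x * Ei i g x \<partial>mu m)"
    unfolding R by (rule mono_integral_sum[OF S, symmetric]) (rule leS2)
  finally show ?thesis .
qed

end

context setting
begin

definition ip :: "nat \<Rightarrow> ((nat \<Rightarrow> real) \<Rightarrow> real) \<Rightarrow> ((nat \<Rightarrow> real) \<Rightarrow> real) \<Rightarrow> real" where
  "ip m f g = (\<integral>x. f x * g x \<partial>mu m)"

lemma ip_sym: "ip m f g = ip m g f"
  unfolding ip_def by (simp add: mult.commute)

lemma ip_nonneg: "0 \<le> ip m f f"
  unfolding ip_def by simp

lemma ip_lin_left:
  assumes "u \<in> poly_fun m k" "v \<in> poly_fun m k" "h \<in> poly_fun m k"
  shows "ip m (\<lambda>x. a * u x + b * v x) h = a * ip m u h + b * ip m v h"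
proof -
  have "ip m (\<lambda>x. a * u x + b * v x) h = (\<integral>x. a * (u x * h x) + b * (v x * h x) \<partial>mu m)"
    unfolding ip_def by (simp add: algebra_simps)
  also have "\<dots> = a * ip m u h + b * ip m v h"
    unfolding ip_def using poly_integrable_mult[OF assms(1,3)] poly_integrable_mult[OF assms(2,3)]
    by simp
  finally show ?thesis .
qed

lemma ip_lin_right:
  assumes "u \<in> poly_fun m k" "v \<in> poly_fun m k" "h \<in> poly_fun m k"
  shows "ip m h (\<lambda>x. a * u x + b * v x) = a * ip m h u + b * ip m h v"
  using ip_lin_left[OF assms] by (simp add: ip_sym)

lemma ip_diff_left:
  assumes "u \<in> poly_fun m k" "v \<in> poly_fun m k" "h \<in> poly_fun m k"
  shows "ip m (\<lambda>x. u x - v x) h = ip m u h - ip m v h"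
  using ip_lin_left[OF assms, of 1 "-1"] by simp

lemma ip_diff_right:
  assumes "u \<in> poly_fun m k" "v \<in> poly_fun m k" "h \<in> poly_fun m k"
  shows "ip m h (\<lambda>x. u x - v x) = ip m h u - ip m h v"
  using ip_lin_right[OF assms, of 1 "-1"] by simp

lemma ip_sum_right:
  assumes "finite I" "\<forall>i\<in>I. Y i \<in> poly_fun m k" "h \<in> poly_fun m k"
  shows "ip m h (\<lambda>x. \<Sum>i\<in>I. Y i x) = (\<Sum>i\<in>I. ip m h (Y i))"
proof -
  have "ip m h (\<lambda>x. \<Sum>i\<in>I. Y i x) = (\<integral>x. (\<Sum>i\<in>I. h x * Y i x) \<partial>mu m)"
    unfolding ip_def by (simp add: sum_distrib_left)
  also have "\<dots> = (\<Sum>i\<in>I. ip m h (Y i))"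
    unfolding ip_def by (rule Bochner_Integration.integral_sum) (use assms in \<open>auto intro: poly_integrable_mult\<close>)
  finally show ?thesis .
qed

lemma Ei_integrable:
  assumes "f \<in> poly_fun m (2 * k)" "j < m"
  shows "integrable F (\<lambda>y. f (x(j := y)))"
proof -
  obtain A c where A: "finite A" "\<forall>a\<in>A. (\<Sum>i<m. a i) \<le> 2 * k" "\<And>a j. a \<in> A \<Longrightarrow> j < m \<Longrightarrow> a j \<le> 2 * k"
    "f = (\<lambda>x. \<Sum>a\<in>A. c a * monomial m a x)" using assms(1) by (rule poly_le) blast+
  have "integrable F (\<lambda>y. \<Sum>a\<in>A. (c a * monomial m (a(j := 0)) x) * y ^ a j)"
    using A(3) assms(2) by (intro Bochner_Integration.integrable_sum integrable_mult_right int_pow) auto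
  then show ?thesis unfolding A(4) using assms(2) by (simp add: mono_upd ac_simps)
qed

lemma Ei_diff:
  assumes "f \<in> poly_fun m (2 * k)" "g \<in> poly_fun m (2 * k)" "j < m"
  shows "Ei j (\<lambda>x. f x - g x) = (\<lambda>x. Ei j f x - Ei j g x)"
  unfolding Ei_def using Ei_integrable[OF assms(1,3)] Ei_integrable[OF assms(2,3)] by (simp add: fun_eq_iff)

lemma pk: "f \<in> poly_fun m k \<Longrightarrow> f \<in> poly_fun m (2 * k)"
  by (rule poly_fun_mono[rotated]) auto

lemma Eik: "f \<in> poly_fun m k \<Longrightarrow> j < m \<Longrightarrow> Ei j f \<in> poly_fun m k"
  by (rule Ei_poly) auto

definition D :: "nat \<Rightarrow> ((nat \<Rightarrow> real) \<Rightarrow> real) \<Rightarrow> (nat \<Rightarrow> real) \<Rightarrow> real" where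
  "D j f = (\<lambda>x. f x - Ei j f x)"

lemma Dk: "f \<in> poly_fun m k \<Longrightarrow> j < m \<Longrightarrow> D j f \<in> poly_fun m k"
  unfolding D_def by (intro poly_fun_diff Eik)

lemma pythag:
  assumes "u \<in> poly_fun m k" "j < m"
  shows "ip m u u = ip m (Ei j u) (Ei j u) + ip m (D j u) (D j u)"
proof -
  have E: "Ei j u \<in> poly_fun m k" and Dd: "D j u \<in> poly_fun m k" using assms Eik Dk by auto
  have u: "u = (\<lambda>x. 1 * Ei j u x + 1 * D j u x)" unfolding D_def by simp
  have cross: "ip m (Ei j u) (D j u) = 0"
  proof -
    have "ip m (Ei j u) (D j u) = ip m u (Ei j (D j u))"
      unfolding ip_def by (rule Ei_selfadj[OF assms(1) Dd assms(2)])
    also have "Ei j (D j u) = (\<lambda>x. Ei j u x - Ei j (Ei j u) x)"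
      unfolding D_def by (rule Ei_diff[OF pk[OF assms(1)] pk[OF E] assms(2)])
    also have "\<dots> = (\<lambda>x. 0)" by (simp add: Ei_idem)
    finally show ?thesis unfolding ip_def by simp
  qed
  have "ip m u u = ip m (\<lambda>x. 1 * Ei j u x + 1 * D j u x) (\<lambda>x. 1 * Ei j u x + 1 * D j u x)"
    using u by simp
  also have "\<dots> = ip m (Ei j u) (Ei j u) + ip m (D j u) (D j u)"
    apply (subst ip_lin_left[OF E Dd])
     apply (rule poly_fun_add; rule poly_fun_scale; fact)
    apply (subst ip_lin_right[OF E Dd E])
    apply (subst ip_lin_right[OF E Dd Dd])
    using cross ip_sym[of m "D j u" "Ei j u"] by simp
  finally show ?thesis .
qed

lemma contraction:
  assumes "u \<in> poly_fun m k" "j < m"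
  shows "ip m (Ei j u) (Ei j u) \<le> ip m u u"
  using pythag[OF assms] ip_nonneg[of m "D j u"] by linarith

lemma fixed_upd:
  assumes "Ei i w = w"
  shows "w (x(i := z)) = w x"
  by (metis Ei_upd assms)

lemma fixed_const:
  assumes "w \<in> poly_fun m d" "\<forall>i<m. Ei i w = w"
  shows "w x = w (\<lambda>_. 0)"
proof -
  have "w x = w (\<lambda>j. if j < l then 0 else x j)" if "l \<le> m" for l
    using that
  proof (induction l)
    case 0 then show ?case by simp
  next
    case (Suc l)
    then have "w x = w (\<lambda>j. if j < l then 0 else x j)" by simp
    also have "\<dots> = w ((\<lambda>j. if j < l then 0 else x j)(l := 0))"
      using fixed_upd[of l w] assms(2) Suc.prems by simp
    also have "(\<lambda>j. if j < l then 0 else x j)(l := 0) = (\<lambda>j. if j < Suc l then 0 else x j)"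
      by (auto simp: fun_eq_iff)
    finally show ?case .
  qed
  then have "w x = w (\<lambda>j. if j < m then 0 else x j)" by simp
  also have "\<dots> = w (\<lambda>_. 0)" by (rule poly_fun_local[OF assms(1)]) simp
  finally show ?thesis .
qed

lemma efron_stein:
  assumes "finite J" "J \<subseteq> {..<m}" "Z \<in> poly_fun m k"
    "\<forall>w\<in>poly_fun m k. (\<forall>i\<in>J. Ei i w = w) \<longrightarrow> ip m Z w = 0"
  shows "ip m Z Z \<le> (\<Sum>i\<in>J. ip m (D i Z) (D i Z))"
  using assms
proof (induction J arbitrary: Z rule: finite_induct)
  case empty
  then show ?case by auto
next
  case (insert j J)
  have j: "j < m" using insert.prems by auto
  define Z' where "Z' = Ei j Z"
  have Z': "Z' \<in> poly_fun m k" unfolding Z'_def using Eik insert.prems j by auto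
  have orth: "\<forall>w\<in>poly_fun m k. (\<forall>i\<in>J. Ei i w = w) \<longrightarrow> ip m Z' w = 0"
  proof (intro ballI impI)
    fix w assume w: "w \<in> poly_fun m k" and fw: "\<forall>i\<in>J. Ei i w = w"
    have "ip m Z' w = ip m Z (Ei j w)"
      unfolding ip_def Z'_def by (rule Ei_selfadj[OF insert.prems(2) w j])
    moreover have "ip m Z (Ei j w) = 0"
    proof -
      have "Ei j w \<in> poly_fun m k" using Eik w j by auto
      moreover have "\<forall>i\<in>insert j J. Ei i (Ei j w) = Ei j w"
      proof
        fix i assume i: "i \<in> insert j J"
        show "Ei i (Ei j w) = Ei j w"
        proof (cases "i = j")
          case True then show ?thesis by (simp add: Ei_idem)
        next
          case False
          then have "i \<in> J" "i < m" using i insert.prems by auto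
          then show ?thesis using Ei_comm[OF pk[OF w], of i j] j fw by auto
        qed
      qed
      ultimately show ?thesis using insert.prems(3) by blast
    qed
    ultimately show "ip m Z' w = 0" by simp
  qed
  have IH: "ip m Z' Z' \<le> (\<Sum>i\<in>J. ip m (D i Z') (D i Z'))"
    using insert.IH[OF _ Z' orth] insert.prems by auto
  have DZ': "D i Z' = Ei j (D i Z)" if "i \<in> J" for i
  proof -
    have i: "i < m" using that insert.prems by auto
    have "Ei j (D i Z) = (\<lambda>x. Ei j Z x - Ei j (Ei i Z) x)"
      unfolding D_def by (rule Ei_diff[OF pk[OF insert.prems(2)] pk[OF Eik[OF insert.prems(2) i]] j])
    also have "\<dots> = D i Z'"
      unfolding D_def Z'_def using Ei_comm[OF pk[OF insert.prems(2)] i j] by simp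
    finally show ?thesis by simp
  qed
  have "(\<Sum>i\<in>J. ip m (D i Z') (D i Z')) \<le> (\<Sum>i\<in>J. ip m (D i Z) (D i Z))"
  proof (rule sum_mono)
    fix i assume i: "i \<in> J"
    then have "i < m" using insert.prems by auto
    then show "ip m (D i Z') (D i Z') \<le> ip m (D i Z) (D i Z)"
      unfolding DZ'[OF i] by (intro contraction Dk insert.prems(2) j)
  qed
  moreover have "ip m Z Z = ip m Z' Z' + ip m (D j Z) (D j Z)"
    unfolding Z'_def by (rule pythag[OF insert.prems(2) j])
  ultimately show ?case using IH insert.hyps by simp
qed

end

context setting
begin

lemma cs_ineq:
  assumes "u \<in> poly_fun m k" "v \<in> poly_fun m k" "0 < t"
  shows "2 * ip m u v \<le> ip m u u / t + t * ip m v v"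
proof -
  have w: "(\<lambda>x. 1 * u x + (- t) * v x) \<in> poly_fun m k"
    by (intro poly_fun_add poly_fun_scale assms)
  have "0 \<le> ip m (\<lambda>x. 1 * u x + (- t) * v x) (\<lambda>x. 1 * u x + (- t) * v x)" by (rule ip_nonneg)
  also have "\<dots> = ip m u u - 2 * t * ip m u v + t * t * ip m v v"
    apply (subst ip_lin_left[OF assms(1,2) w])
    apply (subst ip_lin_right[OF assms(1,2) assms(1)])
    apply (subst ip_lin_right[OF assms(1,2) assms(2)])
    using ip_sym[of m v u] by (simp add: algebra_simps)
  finally have "2 * t * ip m u v \<le> ip m u u + t * t * ip m v v" by simp
  then have "2 * ip m u v * t \<le> (ip m u u / t + t * ip m v v) * t"
    using assms(3) by (simp add: algebra_simps)
  then show ?thesis using assms(3) by (simp add: mult_le_cancel_right)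
qed

lemma variance_drop:
  assumes m: "2 \<le> m" and Yp: "\<forall>i<m. Y i \<in> poly_fun m k" and YE: "\<forall>i<m. Ei i (Y i) = Y i"
    and Y0: "\<forall>i<m. integral\<^sup>L (mu m) (Y i) = 0"
  shows "ip m (\<lambda>x. \<Sum>i<m. Y i x) (\<lambda>x. \<Sum>i<m. Y i x) \<le> real (m - 1) * (\<Sum>i<m. ip m (Y i) (Y i))"
proof -
  define Z where "Z = (\<lambda>x. \<Sum>i<m. Y i x)"
  have Z: "Z \<in> poly_fun m k" unfolding Z_def using Yp by (intro poly_fun_sum) auto
  have intZ: "integral\<^sup>L (mu m) Z = 0"
  proof -
    have "integral\<^sup>L (mu m) Z = (\<Sum>i<m. integral\<^sup>L (mu m) (Y i))"
      unfolding Z_def by (rule Bochner_Integration.integral_sum) (use Yp in \<open>auto intro: poly_integrable pk\<close>)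
    then show ?thesis using Y0 by simp
  qed
  have orth: "\<forall>w\<in>poly_fun m k. (\<forall>i\<in>{..<m}. Ei i w = w) \<longrightarrow> ip m Z w = 0"
  proof (intro ballI impI)
    fix w assume w: "w \<in> poly_fun m k" "\<forall>i\<in>{..<m}. Ei i w = w"
    then have "\<And>x. w x = w (\<lambda>_. 0)" using fixed_const[OF w(1)] by auto
    then have "ip m Z w = (\<integral>x. Z x * w (\<lambda>_. 0) \<partial>mu m)" unfolding ip_def by metis
    also have "\<dots> = integral\<^sup>L (mu m) Z * w (\<lambda>_. 0)" by simp
    finally show "ip m Z w = 0" using intZ by simp
  qed
  have ES: "ip m Z Z \<le> (\<Sum>i<m. ip m (D i Z) (D i Z))"
    using efron_stein[of "{..<m}" m Z] Z orth by auto
  define t where "t = real (m - 1)"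
  have t: "0 < t" "real m = t + 1" using m unfolding t_def by auto
  have step: "2 * ip m Z (Y i) \<le> (ip m Z Z - ip m (D i Z) (D i Z)) / t + t * ip m (Y i) (Y i)"
    if i: "i < m" for i
  proof -
    have "ip m Z (Y i) = ip m Z (Ei i (Y i))" using YE i by simp
    also have "\<dots> = ip m (Ei i Z) (Y i)"
      unfolding ip_def by (rule Ei_selfadj[OF Z _ i, symmetric]) (use Yp i in auto)
    finally have e: "ip m Z (Y i) = ip m (Ei i Z) (Y i)" .
    have "2 * ip m (Ei i Z) (Y i) \<le> ip m (Ei i Z) (Ei i Z) / t + t * ip m (Y i) (Y i)"
      by (rule cs_ineq[OF Eik[OF Z i]]) (use Yp i t in auto)
    moreover have "ip m (Ei i Z) (Ei i Z) = ip m Z Z - ip m (D i Z) (D i Z)"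
      using pythag[OF Z i] by simp
    ultimately show ?thesis using e by simp
  qed
  have "2 * ip m Z Z = (\<Sum>i<m. 2 * ip m Z (Y i))"
    unfolding sum_distrib_left[symmetric] by (subst (2) Z_def) (simp add: ip_sum_right[OF _ _ Z] Yp)
  also have "\<dots> \<le> (\<Sum>i<m. (ip m Z Z - ip m (D i Z) (D i Z)) / t + t * ip m (Y i) (Y i))"
    by (rule sum_mono) (rule step, simp)
  also have "\<dots> = (real m * ip m Z Z - (\<Sum>i<m. ip m (D i Z) (D i Z))) / t + t * (\<Sum>i<m. ip m (Y i) (Y i))"
    by (simp add: sum.distrib sum_divide_distrib[symmetric] sum_subtractf sum_distrib_left)
  also have "\<dots> \<le> (real m * ip m Z Z - ip m Z Z) / t + t * (\<Sum>i<m. ip m (Y i) (Y i))"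
    using ES t(1) by (simp add: divide_right_mono)
  also have "\<dots> = ip m Z Z + t * (\<Sum>i<m. ip m (Y i) (Y i))"
    using t by (simp add: algebra_simps)
  finally have "ip m Z Z \<le> t * (\<Sum>i<m. ip m (Y i) (Y i))" by simp
  then show ?thesis unfolding Z_def t_def .
qed

end

context setting
begin

lemma mF: "measurable M F = borel_measurable M"
  by (rule measurable_cong_sets) simp_all

lemma mFF: "measurable F F = borel_measurable borel"
  by (rule measurable_cong_sets) simp_all

lemma sample0: "sample m F 0 = mu m"
proof -
  have "distr F borel (\<lambda>x. x + 0) = F"
    using distr_id2[of borel F] by simp
  then show ?thesis unfolding sample_def mu_def by simp
qed

lemma sample_shift:
  "sample m F \<theta> = distr (mu m) (mu m) (compose {..<m} (\<lambda>x. x + \<theta>))"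
proof -
  have meas: "(\<lambda>x::real. x + \<theta>) \<in> measurable F F"
    unfolding mFF by simp
  have "distr (PiM {..<m} (\<lambda>_. F)) (PiM {..<m} (\<lambda>_. F)) (compose {..<m} (\<lambda>x. x + \<theta>)) =
        PiM {..<m} (\<lambda>i. distr F F (\<lambda>x. x + \<theta>))"
    by (rule distr_PiM_finite_prob_space') (auto simp: PF meas)
  moreover have "distr F F (\<lambda>x. x + \<theta>) = distr F borel (\<lambda>x. x + \<theta>)"
    by (rule distr_cong) auto
  ultimately show ?thesis unfolding sample_def mu_def by simp
qed

lemma poly_measurable_k:
  "f \<in> poly_fun m (2 * k) \<Longrightarrow> f \<in> borel_measurable (mu m)"
  by (rule poly_measurable)

lemma integral_shift:
  assumes "g \<in> poly_fun m (2 * k)"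
  shows "integral\<^sup>L (sample m F \<theta>) g = (\<integral>x. g (\<lambda>i. x i + \<theta>) \<partial>mu m)"
proof -
  have meas: "compose {..<m} (\<lambda>x. x + \<theta>) \<in> measurable (mu m) (mu m)"
  proof -
    have "(\<lambda>x. \<lambda>i\<in>{..<m}. x i + \<theta>) \<in> measurable (mu m) (mu m)"
      unfolding mu_def
    proof (rule measurable_restrict)
      fix i assume i: "i \<in> {..<m}"
      have "(\<lambda>x. x i) \<in> measurable (PiM {..<m} (\<lambda>_. F)) F"
        using measurable_component_singleton[OF i, of "\<lambda>_. F"] .
      then have "(\<lambda>x. x i) \<in> borel_measurable (PiM {..<m} (\<lambda>_. F))"
        unfolding mF .
      then show "(\<lambda>x. x i + \<theta>) \<in> measurable (PiM {..<m} (\<lambda>_. F)) F"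
        unfolding mF by simp
    qed
    then show ?thesis unfolding compose_def .
  qed
  have "integral\<^sup>L (sample m F \<theta>) g = (\<integral>x. g (compose {..<m} (\<lambda>x. x + \<theta>) x) \<partial>mu m)"
    unfolding sample_shift by (rule integral_distr[OF meas poly_measurable[OF assms]])
  also have "\<dots> = (\<integral>x. g (\<lambda>i. x i + \<theta>) \<partial>mu m)"
    by (intro Bochner_Integration.integral_cong refl poly_fun_local[OF assms]) (simp add: compose_def)
  finally show ?thesis .
qed

definition dr :: "nat \<Rightarrow> nat \<Rightarrow> nat" where
  "dr i j = (if j < i then j else Suc j)"

lemma dr_lt: "j < n \<Longrightarrow> dr i j < Suc n"
  unfolding dr_def by auto

lemma dr_ne: "dr i j \<noteq> i"
  unfolding dr_def by auto

lemma inj_dr: "inj (dr i)"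
  unfolding dr_def inj_def by auto

lemma integral_drop:
  assumes "g \<in> poly_fun n (2 * k)"
  shows "integral\<^sup>L (mu n) g = (\<integral>x. g (\<lambda>j. x (dr i j)) \<partial>mu (Suc n))"
proof -
  have eq: "distr (mu (Suc n)) (mu n) (\<lambda>\<omega>. \<lambda>j\<in>{..<n}. \<omega> (dr i j)) = mu n"
    using distr_PiM_reindex[of "{..<Suc n}" "\<lambda>_. F" "dr i" "{..<n}"] PF inj_dr dr_lt
    unfolding mu_def by (auto intro: inj_on_subset)
  have meas: "(\<lambda>\<omega>. \<lambda>j\<in>{..<n}. \<omega> (dr i j)) \<in> measurable (mu (Suc n)) (mu n)"
    unfolding mu_def
  proof (rule measurable_restrict)
    fix j assume "j \<in> {..<n}"
    then have "dr i j \<in> {..<Suc n}" using dr_lt by auto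
    then show "(\<lambda>x. x (dr i j)) \<in> measurable (PiM {..<Suc n} (\<lambda>_. F)) F"
      by (rule measurable_component_singleton)
  qed
  have "integral\<^sup>L (mu n) g = (\<integral>x. g (\<lambda>j\<in>{..<n}. x (dr i j)) \<partial>mu (Suc n))"
    by (subst eq[symmetric]) (rule integral_distr[OF meas poly_measurable[OF assms]])
  also have "\<dots> = (\<integral>x. g (\<lambda>j. x (dr i j)) \<partial>mu (Suc n))"
    by (intro Bochner_Integration.integral_cong refl poly_fun_local[OF assms]) simp
  finally show ?thesis .
qed

end

lemma resid_const1: "(\<lambda>x. 1) \<in> resid_poly m k"
  unfolding resid_poly_def using poly_fun_const[of 1 m k] by force

lemma resid_diff:
  assumes "r1 \<in> resid_poly m k" "r2 \<in> resid_poly m k"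
  shows "(\<lambda>x. r1 x - r2 x) \<in> resid_poly m k"
proof -
  obtain P1 where P1: "P1 \<in> poly_fun m k" "r1 = (\<lambda>x. P1 (\<lambda>i. x i - xbar m x))"
    using assms(1) unfolding resid_poly_def by blast
  obtain P2 where P2: "P2 \<in> poly_fun m k" "r2 = (\<lambda>x. P2 (\<lambda>i. x i - xbar m x))"
    using assms(2) unfolding resid_poly_def by blast
  have "(\<lambda>z. P1 z - P2 z) \<in> poly_fun m k" by (rule poly_fun_diff[OF P1(1) P2(1)])
  then show ?thesis unfolding resid_poly_def P1(2) P2(2)
    by (intro CollectI exI[of _ "\<lambda>z. P1 z - P2 z"]) auto
qed

context setting
begin

lemma sum_dr:
  fixes x :: "nat \<Rightarrow> real"
  assumes "i < Suc n"
  shows "(\<Sum>j<n. x (dr i j)) = (\<Sum>l<Suc n. x l) - x i"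
proof -
  have img: "dr i ` {..<n} = {..<Suc n} - {i}"
  proof (intro set_eqI iffI)
    fix l assume "l \<in> dr i ` {..<n}"
    then show "l \<in> {..<Suc n} - {i}" using dr_lt dr_ne by auto
  next
    fix l assume l: "l \<in> {..<Suc n} - {i}"
    show "l \<in> dr i ` {..<n}"
    proof (cases "l < i")
      case True
      then have "dr i l = l" "l < n" using l assms unfolding dr_def by auto
      then show ?thesis by (metis imageI lessThan_iff)
    next
      case False
      then have "l > i" using l by auto
      then have "dr i (l - 1) = l" "l - 1 < n" using l unfolding dr_def by auto
      then show ?thesis by (metis imageI lessThan_iff)
    qed
  qed
  have "(\<Sum>j<n. x (dr i j)) = (\<Sum>l\<in>dr i ` {..<n}. x l)"
    using inj_dr[of i] by (subst sum.reindex) (auto intro: inj_on_subset)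
  also have "\<dots> = (\<Sum>l<Suc n. x l) - x i"
  proof -
    have "sum x {..<Suc n} = x i + sum x ({..<Suc n} - {i})"
      by (rule sum.remove) (use assms in auto)
    then show ?thesis unfolding img by linarith
  qed
  finally show ?thesis .
qed


lemma proj_facts:
  assumes "is_proj m k F q" "1 \<le> k"
  shows "pitman m q \<in> poly_fun m k"
    and "integral\<^sup>L (mu m) (pitman m q) = 0"
    and "\<And>r. r \<in> resid_poly m k \<Longrightarrow> ip m (pitman m q) (pitman m q) \<le> ip m (\<lambda>x. xbar m x - r x) (\<lambda>x. xbar m x - r x)"
proof -
  have q: "q \<in> resid_poly m k" and orth: "\<And>p. p \<in> resid_poly m k \<Longrightarrow> (\<integral>x. (xbar m x - q x) * p x \<partial>mu m) = 0"
    using assms(1) unfolding is_proj_def sample0 by auto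
  have qp: "q \<in> poly_fun m k" using q resid_poly_sub by auto
  have xb: "xbar m \<in> poly_fun m k" using xbar_poly assms(2) by auto
  show tp: "pitman m q \<in> poly_fun m k" unfolding pitman_def by (rule poly_fun_diff[OF xb qp])
  show "integral\<^sup>L (mu m) (pitman m q) = 0"
    using orth[OF resid_const1] unfolding pitman_def by simp
  fix r assume r: "r \<in> resid_poly m k"
  define u where "u = (\<lambda>x. q x - r x)"
  have u: "u \<in> resid_poly m k" unfolding u_def by (rule resid_diff[OF q r])
  have up: "u \<in> poly_fun m k" using u resid_poly_sub by auto
  have o: "ip m (pitman m q) u = 0" using orth[OF u] unfolding ip_def pitman_def .
  have eq: "(\<lambda>x. xbar m x - r x) = (\<lambda>x. 1 * pitman m q x + 1 * u x)"
    unfolding pitman_def u_def by auto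
  have "ip m (\<lambda>x. xbar m x - r x) (\<lambda>x. xbar m x - r x) =
        ip m (pitman m q) (pitman m q) + 2 * ip m (pitman m q) u + ip m u u"
    unfolding eq
    apply (subst ip_lin_left[OF tp up])
     apply (rule poly_fun_add; rule poly_fun_scale; fact)
    apply (subst ip_lin_right[OF tp up tp])
    apply (subst ip_lin_right[OF tp up up])
    using ip_sym[of m u "pitman m q"] by simp
  then show "ip m (pitman m q) (pitman m q) \<le> ip m (\<lambda>x. xbar m x - r x) (\<lambda>x. xbar m x - r x)"
    using o ip_nonneg[of m u] by simp
qed

lemma var_eq:
  assumes "is_proj m k F q" "1 \<le> k" "1 \<le> m"
  shows "var (sample m F \<theta>) (pitman m q) = ip m (pitman m q) (pitman m q)"
proof -
  define t where "t = pitman m q"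
  have tp: "t \<in> poly_fun m k" and t0: "integral\<^sup>L (mu m) t = 0"
    using proj_facts[OF assms(1,2)] unfolding t_def by auto
  obtain P where P: "P \<in> poly_fun m k" "q = (\<lambda>x. P (\<lambda>i. x i - xbar m x))"
    using assms(1) unfolding is_proj_def resid_poly_def by blast
  have xb_shift: "xbar m (\<lambda>i. x i + \<theta>) = xbar m x + \<theta>" for x
    using assms(3) unfolding xbar_def by (simp add: sum.distrib field_simps)
  have shift: "t (\<lambda>i. x i + \<theta>) = t x + \<theta>" for x
    unfolding t_def pitman_def P(2) xb_shift by simp
  have int_t: "integrable (mu m) t" using poly_integrable[OF pk[OF tp]] .
  have mean: "integral\<^sup>L (sample m F \<theta>) t = \<theta>"
  proof -
    have "integral\<^sup>L (sample m F \<theta>) t = (\<integral>x. t x + \<theta> \<partial>mu m)"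
      unfolding integral_shift[OF pk[OF tp]] shift ..
    also have "\<dots> = \<theta>"
    proof -
      interpret P: prob_space "mu m" by (rule prob_mu)
      have "(\<integral>x. t x + \<theta> \<partial>mu m) = integral\<^sup>L (mu m) t + (\<integral>x. \<theta> \<partial>mu m)"
        by (rule Bochner_Integration.integral_add[OF int_t]) simp
      then show ?thesis using t0 by (simp add: P.prob_space)
    qed
    finally show ?thesis .
  qed
  have sq: "(\<lambda>x. (t x - \<theta>) ^ 2) \<in> poly_fun m (2 * k)"
  proof -
    have "(\<lambda>x. t x - \<theta>) \<in> poly_fun m k" by (intro poly_fun_diff tp poly_fun_const)
    from poly_fun_mult[OF this this] show ?thesis by (simp add: power2_eq_square mult_2)
  qed
  have "var (sample m F \<theta>) t = (\<integral>x. (t x - \<theta>) ^ 2 \<partial>sample m F \<theta>)"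
    unfolding var_def mean ..
  also have "\<dots> = (\<integral>x. (t (\<lambda>i. x i + \<theta>) - \<theta>) ^ 2 \<partial>mu m)"
    by (rule integral_shift[OF sq])
  also have "\<dots> = ip m t t" unfolding shift ip_def by (simp add: power2_eq_square)
  finally show ?thesis unfolding t_def .
qed

lemma loo:
  assumes "q \<in> resid_poly n k" "1 \<le> n" "1 \<le> k"
  shows "\<exists>r\<in>resid_poly (Suc n) k. \<forall>x. (1 / real (Suc n)) * (\<Sum>i<Suc n. pitman n q (\<lambda>j. x (dr i j)))
            = xbar (Suc n) x - r x"
proof -
  obtain P where P: "P \<in> poly_fun n k" "q = (\<lambda>x. P (\<lambda>i. x i - xbar n x))"
    using assms(1) unfolding resid_poly_def by blast
  define N where "N = Suc n"
  define R where "R = (\<lambda>z. (1 / real N) * (\<Sum>i<N. (1 / real n) * z i + P (\<lambda>j. 1 * z (dr i j) + (1 / real n) * z i)))"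
  have Rp: "R \<in> poly_fun N k"
    unfolding R_def
  proof (intro poly_fun_scale poly_fun_sum ballI poly_fun_add)
    fix i assume i: "i \<in> {..<N}"
    show "(\<lambda>z. z i) \<in> poly_fun N k" using i assms(3) by (intro poly_fun_var) auto
    show "(\<lambda>z. P (\<lambda>j. 1 * z (dr i j) + 1 / real n * z i)) \<in> poly_fun N k"
    proof (rule poly_fun_compose[OF P(1)], intro allI impI)
      fix j assume "j < n"
      then show "(\<lambda>z. 1 * z (dr i j) + 1 / real n * z i) \<in> poly_fun N 1"
        using i unfolding N_def by (intro poly_fun_add poly_fun_scale poly_fun_var dr_lt) auto
    qed
  qed simp
  define r where "r = (\<lambda>x. R (\<lambda>l. x l - xbar N x))"
  have r: "r \<in> resid_poly N k" unfolding r_def resid_poly_def using Rp by blast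
  have n0: "real n \<noteq> 0" using assms(2) by auto
  have key: "pitman n q (\<lambda>j. x (dr i j)) = xbar N x - ((1 / real n) * (x i - xbar N x) +
       P (\<lambda>j. 1 * (x (dr i j) - xbar N x) + (1 / real n) * (x i - xbar N x)))"
    if i: "i < N" for x i
  proof -
    have sN: "(\<Sum>l<N. x l) = real N * xbar N x" unfolding xbar_def N_def by simp
    have xb: "xbar n (\<lambda>j. x (dr i j)) = xbar N x - (1 / real n) * (x i - xbar N x)"
    proof -
      have ar: "(S - a) / r = S / (r + 1) - (1 / r) * (a - S / (r + 1))" if "r \<noteq> 0" "r + 1 \<noteq> 0" for S a r :: real
        using that by (simp add: divide_simps) (simp add: algebra_simps)
      have "xbar n (\<lambda>j. x (dr i j)) = ((\<Sum>l<N. x l) - x i) / real n"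
        unfolding xbar_def N_def sum_dr[OF i[unfolded N_def]] ..
      also have "\<dots> = (\<Sum>l<N. x l) / (real n + 1) - (1 / real n) * (x i - (\<Sum>l<N. x l) / (real n + 1))"
        by (rule ar) (use n0 in auto)
      also have "\<dots> = xbar N x - (1 / real n) * (x i - xbar N x)"
        unfolding xbar_def N_def by (simp add: add.commute)
      finally show ?thesis .
    qed
    show ?thesis unfolding pitman_def P(2) xb by (simp add: algebra_simps)
  qed
  have "\<forall>x. (1 / real N) * (\<Sum>i<N. pitman n q (\<lambda>j. x (dr i j))) = xbar N x - r x"
  proof
    fix x
    define X where "X = xbar N x"
    define G where "G i = (1 / real n) * (x i - X) +
       P (\<lambda>j. 1 * (x (dr i j) - X) + (1 / real n) * (x i - X))" for i
    have rx: "r x = (1 / real N) * (\<Sum>i<N. G i)"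
      unfolding r_def R_def G_def X_def by simp
    have "(\<Sum>i<N. pitman n q (\<lambda>j. x (dr i j))) = (\<Sum>i<N. X - G i)"
      by (intro sum.cong refl) (simp add: key G_def X_def)
    also have "\<dots> = real N * X - (\<Sum>i<N. G i)"
      by (simp add: sum_subtractf)
    finally have "(1 / real N) * (\<Sum>i<N. pitman n q (\<lambda>j. x (dr i j))) = (1 / real N) * (real N * X - (\<Sum>i<N. G i))"
      by simp
    also have "\<dots> = X - r x" unfolding rx by (simp add: N_def right_diff_distrib)
    finally show "(1 / real N) * (\<Sum>i<N. pitman n q (\<lambda>j. x (dr i j))) = xbar N x - r x"
      unfolding X_def .
  qed
  then show ?thesis using r unfolding N_def by blast
qed

lemma main_loc:
  assumes k: "1 \<le> k" and n: "1 \<le> n" and pn: "is_proj n k F q" and pN: "is_proj (Suc n) k F q'"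
  shows "real (n + 1) * var (sample (Suc n) F \<theta>) (pitman (Suc n) q')
           \<le> real n * var (sample n F \<theta>) (pitman n q)"
proof -
  define N where "N = Suc n"
  define t where "t = pitman n q"
  define t' where "t' = pitman N q'"
  have tp: "t \<in> poly_fun n k" and t0: "integral\<^sup>L (mu n) t = 0"
    using proj_facts[OF pn k] unfolding t_def by auto
  have best: "\<And>r. r \<in> resid_poly N k \<Longrightarrow> ip N t' t' \<le> ip N (\<lambda>x. xbar N x - r x) (\<lambda>x. xbar N x - r x)"
    using proj_facts(3)[OF pN[folded N_def] k] unfolding t'_def by blast
  define Y where "Y = (\<lambda>i x. t (\<lambda>j. x (dr i j)))"
  have Yp: "\<forall>i<N. Y i \<in> poly_fun N k"
  proof (intro allI impI)
    fix i assume "i < N"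
    show "Y i \<in> poly_fun N k" unfolding Y_def
      by (rule poly_fun_compose[OF tp]) (use k in \<open>auto simp: N_def intro!: poly_fun_var dr_lt\<close>)
  qed
  have YE: "\<forall>i<N. Ei i (Y i) = Y i"
    by (intro allI impI Ei_fixed) (simp add: Y_def dr_ne)
  have Y0: "\<forall>i<N. integral\<^sup>L (mu N) (Y i) = 0"
    using integral_drop[OF pk[OF tp]] t0 unfolding Y_def N_def by simp
  have tt: "(\<lambda>x. t x * t x) \<in> poly_fun n (2 * k)"
    using poly_fun_mult[OF tp tp] by (simp add: mult_2)
  have YY: "ip N (Y i) (Y i) = ip n t t" for i
    unfolding ip_def Y_def N_def using integral_drop[OF tt, of i] by simp
  define Z where "Z = (\<lambda>x. \<Sum>i<N. Y i x)"
  have VD: "ip N Z Z \<le> real (N - 1) * (\<Sum>i<N. ip N (Y i) (Y i))"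
    unfolding Z_def by (rule variance_drop) (use n Yp YE Y0 in \<open>auto simp: N_def\<close>)
  then have VD': "ip N Z Z \<le> real n * (real N * ip n t t)"
    unfolding YY by (simp add: N_def)
  obtain r where r: "r \<in> resid_poly N k" and req: "\<forall>x. (1 / real N) * Z x = xbar N x - r x"
    using loo[OF _ n k, of q] pn unfolding is_proj_def Z_def Y_def t_def N_def by blast
  have "ip N t' t' \<le> ip N (\<lambda>x. xbar N x - r x) (\<lambda>x. xbar N x - r x)" by (rule best[OF r])
  also have "\<dots> = ip N (\<lambda>x. (1 / real N) * Z x) (\<lambda>x. (1 / real N) * Z x)"
    using req by simp
  also have "\<dots> = (1 / real N) * (1 / real N) * ip N Z Z"
    unfolding ip_def by (simp add: ac_simps)
  finally have A: "ip N t' t' \<le> (1 / real N) * (1 / real N) * ip N Z Z" .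
  have B: "(1 / real N) * (1 / real N) * ip N Z Z \<le> (1 / real N) * (1 / real N) * (real n * (real N * ip n t t))"
    by (rule mult_left_mono[OF VD']) simp
  have C: "real N * ((1 / real N) * (1 / real N) * (real n * (real N * ip n t t))) = real n * ip n t t"
    by (simp add: N_def)
  have "real N * ip N t' t' \<le> real N * ((1 / real N) * (1 / real N) * (real n * (real N * ip n t t)))"
    by (rule mult_left_mono) (use A B in auto)
  then have fin: "real N * ip N t' t' \<le> real n * ip n t t" unfolding C .
  have v1: "var (sample (Suc n) F \<theta>) (pitman (Suc n) q') = ip N t' t'"
    unfolding t'_def N_def by (rule var_eq[OF pN k]) simp
  have v2: "var (sample n F \<theta>) (pitman n q) = ip n t t"
    unfolding t_def by (rule var_eq[OF pn k n])
  show ?thesis using fin unfolding v1 v2 N_def by simp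
qed

end


theorem mainTheorem11:
  fixes F :: "real measure" and k n :: nat and \<theta> :: real
    and q q' :: "(nat \<Rightarrow> real) \<Rightarrow> real"
  assumes "real_distribution F"
    and "k \<ge> 1"
    and "integrable F (\<lambda>x. x ^ (2 * k))"
    and "n \<ge> 1"
    and "is_proj n k F q"
    and "is_proj (Suc n) k F q'"
  shows "real (n + 1) * var (sample (Suc n) F \<theta>) (pitman (Suc n) q')
           \<le> real n * var (sample n F \<theta>) (pitman n q)"
proof -
  interpret setting F k
    by (rule setting.intro[OF assms(1) assms(3)])
  show ?thesis by (rule main_loc[OF assms(2) assms(4) assms(5) assms(6)])
qed

end
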